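(* Let $\Omega\subset\mathbb{R}^d$ be a bounded domain with the interior cone property described in the context (with cone $V$ and constants $\mu>0$, $\nu<1$), let $\alpha\in(0,1)$ and $J\in C^\alpha(\Omega)$. Let $q\ge d/\alpha$, $M>0$, $C>0$, define $$\kappa(t):=d\,\frac{|V|}{\mu^d}\int_0^\mu\big(t+M r^\alpha\big)^{-q}r^{d-1}\,dr,\quad t>0,\qquad \delta:=\kappa^{-1}(C),$$ and suppose that $$\int_\Omega\max\{\delta,J(x)\}^{-q}\,dx\le C\quad\text{and}\quad\sup_{x_1,x_2\in\Omega,\ |x_1-x_2|<\mu}\frac{|J(x_1)-J(x_2)|}{|x_1-x_2|^\alpha}\le M.$$ Then $J(x)>\delta>0$ for all $x\in\Omega$.
   Context: Interior cone property: with $V:=B_\mu(0)\cap\{z=(z_1,\dots,z_d)\in\mathbb{R}^d: z_1>\nu|z|\}$ for fixed constants $\mu>0$, $\nu<1$, for each $x\in\Omega$ there is a rotation $Q_x\in SO(d)$ with $x+Q_xV\subset\Omega$. $|V|$ is the Lebesgue measure of $V$. *)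

theory Defs
  imports "HOL-Analysis.Analysis"
begin

definition holder_continuous_on :: "real \<Rightarrow> ('a::metric_space) set \<Rightarrow> ('a \<Rightarrow> real) \<Rightarrow> bool" where
  "holder_continuous_on \<alpha> S f \<longleftrightarrow>
     (\<exists>K. \<forall>x\<in>S. \<forall>y\<in>S. \<bar>f x - f y\<bar> \<le> K * dist x y powr \<alpha>)"

text \<open>The cone V = B_mu(0) intersected with {z. z_1 > nu |z|}; the distinguished
  "first" coordinate is the index i0.\<close>
definition cone_V :: "'n::finite \<Rightarrow> real \<Rightarrow> real \<Rightarrow> (real ^ 'n) set" where
  "cone_V i0 \<mu> \<nu> = ball 0 \<mu> \<inter> {z. z $ i0 > \<nu> * norm z}"

definition rotation_matrix :: "real ^ 'n ^ 'n \<Rightarrow> bool" where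
  "rotation_matrix Q \<longleftrightarrow> orthogonal_matrix Q \<and> det Q = 1"

definition interior_cone_property :: "(real ^ 'n) set \<Rightarrow> 'n \<Rightarrow> real \<Rightarrow> real \<Rightarrow> bool" where
  "interior_cone_property \<Omega> i0 \<mu> \<nu> \<longleftrightarrow>
     (\<forall>x\<in>\<Omega>. \<exists>Q. rotation_matrix Q \<and> (\<lambda>v. x + Q *v v) ` cone_V i0 \<mu> \<nu> \<subseteq> \<Omega>)"

definition kappa :: "nat \<Rightarrow> real \<Rightarrow> real \<Rightarrow> real \<Rightarrow> real \<Rightarrow> real \<Rightarrow> real \<Rightarrow> real" where
  "kappa d volV \<mu> M \<alpha> q t =
     real d * volV / \<mu> ^ d *
       integral {0..\<mu>} (\<lambda>r. (t + M * r powr \<alpha>) powr (-q) * r ^ (d - 1))"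

end

theory Submission
  imports Defs
begin


lemma measure_linear_image_fin:
  fixes f :: "real^'n::finite \<Rightarrow> real^'n"
  assumes "linear f" "S \<in> lmeasurable"
  shows "(f ` S) \<in> lmeasurable \<and> measure lebesgue (f ` S) = \<bar>det (matrix f)\<bar> * measure lebesgue S"
proof -
  let ?Q = "\<lambda>(f::real^'n \<Rightarrow> real^'n) (S::(real^'n) set). measure lebesgue (f ` S) = \<bar>det (matrix f)\<bar> * measure lebesgue S"
  have "\<forall>S \<in> lmeasurable. (f ` S) \<in> lmeasurable \<and> ?Q f S"
  proof (rule induct_linear_elementary [OF \<open>linear f\<close>]; intro ballI)
    fix f g and S :: "(real,'n) vec set"
    assume "linear f" and "linear g"
      and f [rule_format]: "\<forall>S \<in> lmeasurable. f ` S \<in> lmeasurable \<and> ?Q f S"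
      and g [rule_format]: "\<forall>S \<in> lmeasurable. g ` S \<in> lmeasurable \<and> ?Q g S"
      and S: "S \<in> lmeasurable"
    then have gS: "g ` S \<in> lmeasurable"
      by blast
    show "(f \<circ> g) ` S \<in> lmeasurable \<and> ?Q (f \<circ> g) S"
      using f [OF gS] g [OF S] matrix_compose [OF \<open>linear g\<close> \<open>linear f\<close>]
      by (simp add: o_def image_comp abs_mult det_mul)
  next
    fix f :: "real^'n::_ \<Rightarrow> real^'n::_" and i and S :: "(real^'n::_) set"
    assume "linear f" and 0: "\<And>x. f x $ i = 0" and "S \<in> lmeasurable"
    then have "\<not> inj f"
      by (metis (full_types) linear_injective_imp_surjective one_neq_zero surjE vec_component)
    have detf: "det (matrix f) = 0"
      using \<open>\<not> inj f\<close> det_nz_iff_inj[OF \<open>linear f\<close>] by blast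
    show "f ` S \<in> lmeasurable \<and> ?Q f S"
    proof
      show "f ` S \<in> lmeasurable"
        using lmeasurable_iff_indicator_has_integral \<open>linear f\<close> \<open>\<not> inj f\<close> negligible_UNIV negligible_linear_singular_image by blast
      have "measure lebesgue (f ` S) = 0"
        by (meson \<open>\<not> inj f\<close> \<open>linear f\<close> negligible_imp_measure0 negligible_linear_singular_image)
      also have "\<dots> = \<bar>det (matrix f)\<bar> * measure lebesgue S"
        by (simp add: detf)
      finally show "?Q f S" .
    qed
  next
    fix c and S :: "(real^'n::_) set"
    assume "S \<in> lmeasurable"
    show "(\<lambda>a. \<chi> i. c i * a $ i) ` S \<in> lmeasurable \<and> ?Q (\<lambda>a. \<chi> i. c i * a $ i) S"
    proof
      show "(\<lambda>a. \<chi> i. c i * a $ i) ` S \<in> lmeasurable"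
        by (simp add: \<open>S \<in> lmeasurable\<close> measurable_stretch)
      show "?Q (\<lambda>a. \<chi> i. c i * a $ i) S"
        by (simp add: measure_stretch [OF \<open>S \<in> lmeasurable\<close>, of c] axis_def matrix_def det_diagonal)
    qed
  next
    fix m :: "'n" and n :: "'n" and S :: "(real, 'n) vec set"
    assume "m \<noteq> n" and "S \<in> lmeasurable"
    let ?h = "\<lambda>v::(real, 'n) vec. \<chi> i. v $ Transposition.transpose m n i"
    have lin: "linear ?h"
      by (rule linearI) (simp_all add: plus_vec_def scaleR_vec_def)
    have meq: "measure lebesgue ((\<lambda>v::(real, 'n) vec. \<chi> i. v $ Transposition.transpose m n i) ` cbox a b)
             = measure lebesgue (cbox a b)" for a b
    proof (cases "cbox a b = {}")
      case True then show ?thesis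
        by simp
    next
      case False
      then have him: "?h ` (cbox a b) \<noteq> {}"
        by blast
      have eq: "?h ` (cbox a b) = cbox (?h a) (?h b)"
        by (auto simp: image_iff lambda_swap_Galois mem_box_cart) (metis transpose_involutory)+
      show ?thesis
        using him prod.permute [OF permutes_swap_id, where S=UNIV and g="\<lambda>i. (b - a)$i", symmetric]
        by (simp add: eq content_cbox_cart False)
    qed
    have "(\<chi> i j. if Transposition.transpose m n i = j then 1 else 0) = (\<chi> i j. if j = Transposition.transpose m n i then 1 else (0::real))"
      by (auto intro!: Cart_lambda_cong)
    then have "matrix ?h = transpose(\<chi> i j. mat 1 $ i $ Transposition.transpose m n j)"
      by (auto simp: matrix_eq transpose_def axis_def mat_def matrix_def)
    then have 1: "\<bar>det (matrix ?h)\<bar> = 1"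
      by (simp add: det_permute_columns permutes_swap_id sign_swap_id abs_mult)
    show "?h ` S \<in> lmeasurable \<and> ?Q ?h S"
      using measure_linear_sufficient [OF lin \<open>S \<in> lmeasurable\<close>] meq 1 by force
  next
    fix m n :: "'n" and S :: "(real, 'n) vec set"
    assume "m \<noteq> n" and "S \<in> lmeasurable"
    let ?h = "\<lambda>v::(real, 'n) vec. \<chi> i. if i = m then v $ m + v $ n else v $ i"
    have lin: "linear ?h"
      by (rule linearI) (auto simp: algebra_simps plus_vec_def scaleR_vec_def vec_eq_iff)
    have "matrix ?h = (\<chi> k. if k = m then row m (mat 1) + 1 *s row n (mat 1) else row k (mat 1))"
      by (auto simp: matrix_def vec_eq_iff row_def mat_def axis_def)
    then have 1: "det(matrix ?h) = 1"
      using det_row_operation[OF \<open>m \<noteq> n\<close>, of "mat 1" 1] by simp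
    have meq: "measure lebesgue (?h ` (cbox a b)) = measure lebesgue (cbox a b)" for a b
    proof (cases "cbox a b = {}")
      case True then show ?thesis by simp
    next
      case False
      then have ne: "(+) (\<chi> i. if i = n then - a $ n else 0) ` cbox a b \<noteq> {}"
        by auto
      let ?v = "\<chi> i. if i = n then - a $ n else 0"
      have "?h ` cbox a b
            = (+) (\<chi> i. if i = m \<or> i = n then a $ n else 0) ` ?h ` (+) ?v ` (cbox a b)"
        using \<open>m \<noteq> n\<close> unfolding image_comp o_def by (force simp: vec_eq_iff)
      then have "measure lebesgue (?h ` (cbox a b))
               = measure lebesgue ((\<lambda>v. \<chi> i. if i = m then v $ m + v $ n else v $ i) `
                                   (+) ?v ` cbox a b)"
        by (rule ssubst) (rule measure_translation)
      also have "\<dots> = measure lebesgue ((\<lambda>v. \<chi> i. if i = m then v $ m + v $ n else v $ i) ` cbox (?v +a) (?v + b))"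
        by (metis (no_types, lifting) cbox_translation)
      also have "\<dots> = measure lebesgue ((+) ?v ` cbox a b)"
        apply (subst measure_shear_interval)
        using \<open>m \<noteq> n\<close> ne apply auto
        apply (simp add: cbox_translation)
        by (metis cbox_borel cbox_translation measure_completion sets_lborel)
      also have "\<dots> = measure lebesgue (cbox a b)"
        by (rule measure_translation)
        finally show ?thesis .
      qed
    show "?h ` S \<in> lmeasurable \<and> ?Q ?h S"
      using measure_linear_sufficient [OF lin \<open>S \<in> lmeasurable\<close>] meq 1 by force
  qed
  with assms show ?thesis
    by metis
qed

lemma measure_orth_image:
  fixes Q :: "real^'n::finite^'n"
  assumes "orthogonal_matrix Q" "S \<in> lmeasurable"
  shows "((*v) Q ` S) \<in> lmeasurable \<and> measure lebesgue ((*v) Q ` S) = measure lebesgue S"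
proof -
  have "\<bar>det Q\<bar> = 1" using det_orthogonal_matrix[OF assms(1)] by auto
  then show ?thesis using measure_linear_image_fin[of "(*v) Q" S] assms(2)
    by (simp add: matrix_vector_mul_linear)
qed



definition fK :: "real \<Rightarrow> real \<Rightarrow> real \<Rightarrow> nat \<Rightarrow> real \<Rightarrow> real \<Rightarrow> real" where
  "fK M \<alpha> q n t r = (t + M * r powr \<alpha>) powr (-q) * r ^ n"

lemma fK_cont:
  assumes "M \<ge> 0" "\<alpha> > 0"
  shows "continuous_on ({0<..} \<times> {0..\<mu>}) (\<lambda>(t,r). fK M \<alpha> q n t r)"
proof -
  have c1: "continuous_on ({0<..} \<times> {0..\<mu>}) (\<lambda>z::real\<times>real. snd z powr \<alpha>)"
    by (rule continuous_on_powr') (auto intro!: continuous_intros simp: assms)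
  have c2: "continuous_on ({0<..} \<times> {0..\<mu>}) (\<lambda>z::real\<times>real. (fst z + M * snd z powr \<alpha>) powr (-q))"
    by (rule continuous_on_powr) (auto intro!: continuous_intros c1 simp: assms,
       metis add_pos_nonneg assms(1) less_irrefl mult_nonneg_nonneg powr_ge_zero)
  have "continuous_on ({0<..} \<times> {0..\<mu>}) (\<lambda>z::real\<times>real. (fst z + M * snd z powr \<alpha>) powr (-q) * snd z ^ n)"
    by (intro continuous_intros c2)
  then show ?thesis by (simp add: fK_def case_prod_beta)
qed

lemma fK_cont_r:
  assumes "M \<ge> 0" "\<alpha> > 0" "t > 0"
  shows "continuous_on {0..\<mu>} (fK M \<alpha> q n t)"
proof -
  have "continuous_on ((\<lambda>r. (t, r)) ` {0..\<mu>}) (\<lambda>(t,r). fK M \<alpha> q n t r)"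
    by (rule continuous_on_subset[OF fK_cont[OF assms(1,2)]]) (auto simp: assms)
  then have "continuous_on {0..\<mu>} ((\<lambda>(t,r). fK M \<alpha> q n t r) \<circ> (\<lambda>r. (t, r)))"
    by (intro continuous_on_compose continuous_intros)
  then show ?thesis by (simp add: o_def)
qed

lemma fK_int:
  assumes "M \<ge> 0" "\<alpha> > 0" "t > 0" "{a..b} \<subseteq> {0..\<mu>}"
  shows "fK M \<alpha> q n t integrable_on {a..b}"
  using integrable_continuous_interval continuous_on_subset[OF fK_cont_r[OF assms(1-3)] assms(4)] by blast

lemma K_cont:
  assumes "M \<ge> 0" "\<alpha> > 0"
  shows "continuous_on {0<..} (\<lambda>t. integral {0..\<mu>} (fK M \<alpha> q n t))"
  using integral_continuous_on_param[of "{0<..}" 0 \<mu> "fK M \<alpha> q n"] fK_cont[OF assms]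
  by (simp add: cbox_interval)

lemma fK_nonneg: "M \<ge> 0 \<Longrightarrow> r \<ge> 0 \<Longrightarrow> fK M \<alpha> q n t r \<ge> 0"
  by (simp add: fK_def)

lemma K_strict:
  assumes "M \<ge> 0" "\<alpha> > 0" "q > 0" "\<mu> > 0" "0 < t1" "t1 < t2"
  shows "integral {0..\<mu>} (fK M \<alpha> q n t2) < integral {0..\<mu>} (fK M \<alpha> q n t1)"
proof -
  have "integral (cbox 0 \<mu>) (fK M \<alpha> q n t2) < integral (cbox 0 \<mu>) (fK M \<alpha> q n t1)"
  proof (rule integral_less)
    show "continuous_on (cbox 0 \<mu>) (fK M \<alpha> q n t2)" "continuous_on (cbox 0 \<mu>) (fK M \<alpha> q n t1)"
      using fK_cont_r assms by (auto simp: cbox_interval)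
    show "box 0 \<mu> \<noteq> {}" using assms by (auto simp: box_real)
    fix r assume r: "r \<in> box 0 \<mu>"
    then have r0: "r > 0" by (auto simp: box_real)
    have "(t2 + M * r powr \<alpha>) powr (-q) < (t1 + M * r powr \<alpha>) powr (-q)"
      by (rule powr_less_mono2_neg) (use assms in \<open>auto intro!: add_pos_nonneg\<close>)
    then show "fK M \<alpha> q n t2 r < fK M \<alpha> q n t1 r"
      unfolding fK_def using r0 by (intro mult_strict_right_mono) auto
  qed
  then show ?thesis by (simp add: cbox_interval)
qed

lemma K_large:
  assumes "M \<ge> 0" "\<alpha> > 0" "q \<ge> 1" "\<mu> > 0" "c > 0"
  shows "\<exists>t>0. integral {0..\<mu>} (fK M \<alpha> q n t) < c"
proof -
  define t where "t = max 1 (2 * \<mu> * \<mu> ^ n / c)"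
  have t1: "t \<ge> 1" and t2: "t \<ge> 2 * \<mu> * \<mu> ^ n / c" by (auto simp: t_def)
  have tp: "t > 0" using t1 by simp
  have le: "fK M \<alpha> q n t r \<le> t powr (-1) * \<mu> ^ n" if "r \<in> {0..\<mu>}" for r
  proof -
    have "(t + M * r powr \<alpha>) powr (-q) \<le> t powr (-q)"
      by (rule powr_mono2') (use assms tp that in auto)
    also have "\<dots> \<le> t powr (-1)"
      using t1 assms by (intro powr_mono) auto
    finally have a: "(t + M * r powr \<alpha>) powr (-q) \<le> t powr (-1)" .
    have b: "r ^ n \<le> \<mu> ^ n" using that by (auto intro: power_mono)
    show ?thesis unfolding fK_def
      by (rule mult_mono[OF a b]) (use that in auto)
  qed
  have "integral {0..\<mu>} (fK M \<alpha> q n t) \<le> integral {0..\<mu>} (\<lambda>_. t powr (-1) * \<mu> ^ n)"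
    by (rule integral_le[OF fK_int[OF assms(1,2) tp order_refl]]) (use le in auto)
  also have "\<dots> = \<mu> * (\<mu> ^ n / t)" using assms tp by (simp add: powr_minus divide_inverse)
  also have "\<dots> < c"
  proof -
    have "\<mu> * \<mu> ^ n > 0" using assms by simp
    then have "\<mu> * \<mu> ^ n / t \<le> \<mu> * \<mu> ^ n / (2 * \<mu> * \<mu> ^ n / c)"
      using t2 assms tp by (intro divide_left_mono) auto
    also have "\<dots> = c / 2" using assms by (simp add: field_simps)
    finally have "\<mu> * \<mu> ^ n / t \<le> c / 2" .
    moreover have "\<mu> * (\<mu> ^ n / t) = \<mu> * \<mu> ^ n / t" by simp
    ultimately show ?thesis using assms by linarith
  qed
  finally show ?thesis using tp by blast
qed

lemma K_small:
  assumes "M > 0" "\<alpha> > 0" "q > 0" "\<mu> > 0" "real n + 1 \<le> \<alpha> * q"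
  shows "\<exists>t>0. integral {0..\<mu>} (fK M \<alpha> q n t) > c"
proof -
  define c0 where "c0 = (2*M) powr (-q) * \<mu> powr (real n + 1 - \<alpha> * q)"
  have c0: "c0 > 0" using assms by (simp add: c0_def)
  define L where "L = \<bar>c\<bar> / c0 + 1"
  have L: "L > 0" using c0 by (simp add: L_def add_nonneg_pos)
  define \<epsilon> where "\<epsilon> = \<mu> * exp (-L)"
  have e0: "\<epsilon> > 0" using assms by (simp add: \<epsilon>_def)
  have e1: "\<epsilon> < \<mu>" using assms L by (simp add: \<epsilon>_def)
  define t where "t = M * \<epsilon> powr \<alpha>"
  have t0: "t > 0" using assms e0 by (simp add: t_def)
  have lb: "c0 / r \<le> fK M \<alpha> q n t r" if r: "r \<in> {\<epsilon>..\<mu>}" for r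
  proof -
    have r0: "r > 0" using r e0 by auto
    have "t \<le> M * r powr \<alpha>" unfolding t_def
      using r e0 assms by (intro mult_left_mono powr_mono2) auto
    then have "t + M * r powr \<alpha> \<le> 2 * M * r powr \<alpha>" by simp
    then have "(2 * M * r powr \<alpha>) powr (-q) \<le> (t + M * r powr \<alpha>) powr (-q)"
      using t0 assms by (intro powr_mono2') (auto intro!: add_pos_nonneg)
    moreover have "(2 * M * r powr \<alpha>) powr (-q) = (2*M) powr (-q) * r powr (- \<alpha> * q)"
      using assms r0 by (simp add: powr_mult powr_powr)
    ultimately have A: "(2*M) powr (-q) * r powr (- \<alpha> * q) \<le> (t + M * r powr \<alpha>) powr (-q)" by simp
    have rn: "r ^ n = r powr (real n)" using r0 by (simp add: powr_realpow)
    have "r powr (- \<alpha> * q) * r ^ n = r powr (- \<alpha> * q + real n)"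
      unfolding rn by (rule powr_add[symmetric])
    also have "\<dots> = r powr ((real n + 1 - \<alpha> * q) + (-1))" by (simp add: algebra_simps)
    also have "\<dots> = r powr (real n + 1 - \<alpha> * q) * r powr (-1)" by (rule powr_add)
    finally have "r powr (- \<alpha> * q) * r ^ n = r powr (real n + 1 - \<alpha> * q) * r powr (-1)" .
    moreover have "r powr (real n + 1 - \<alpha> * q) * r powr (-1) \<ge> \<mu> powr (real n + 1 - \<alpha> * q) * r powr (-1)"
      using r r0 assms by (intro mult_right_mono powr_mono2') auto
    ultimately have B: "\<mu> powr (real n + 1 - \<alpha> * q) / r \<le> r powr (- \<alpha> * q) * r ^ n"
      using r0 by (simp add: powr_minus divide_inverse)
    have "c0 / r = (2*M) powr (-q) * (\<mu> powr (real n + 1 - \<alpha> * q) / r)"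
      by (simp add: c0_def)
    also have "\<dots> \<le> (2*M) powr (-q) * (r powr (- \<alpha> * q) * r ^ n)"
      by (intro mult_left_mono B) auto
    also have "\<dots> = ((2*M) powr (-q) * r powr (- \<alpha> * q)) * r ^ n" by simp
    also have "\<dots> \<le> (t + M * r powr \<alpha>) powr (-q) * r ^ n"
      using r0 by (intro mult_right_mono A) auto
    finally show ?thesis by (simp add: fK_def)
  qed
  have ftc: "((\<lambda>r. c0 / r) has_integral (c0 * ln \<mu> - c0 * ln \<epsilon>)) {\<epsilon>..\<mu>}"
  proof (rule fundamental_theorem_of_calculus[where f = "\<lambda>r. c0 * ln r"])
    show "\<epsilon> \<le> \<mu>" using e1 by simp
    fix x assume x: "x \<in> {\<epsilon>..\<mu>}"
    then have "x > 0" using e0 by auto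
    then have "((\<lambda>r. c0 * ln r) has_real_derivative c0 / x) (at x within {\<epsilon>..\<mu>})"
      by (auto intro!: derivative_eq_intros simp: field_simps)
    then show "((\<lambda>r. c0 * ln r) has_vector_derivative c0 / x) (at x within {\<epsilon>..\<mu>})"
      by (simp add: has_real_derivative_iff_has_vector_derivative)
  qed
  have "ln \<epsilon> = ln \<mu> - L" using assms by (simp add: \<epsilon>_def ln_mult)
  then have val: "c0 * ln \<mu> - c0 * ln \<epsilon> = c0 * L" by (simp add: right_diff_distrib[symmetric])
  have "c0 * L = \<bar>c\<bar> + c0" using c0 by (simp add: L_def field_simps)
  then have "c < c0 * L" using c0 abs_ge_self[of c] by linarith
  also have "c0 * L \<le> integral {\<epsilon>..\<mu>} (fK M \<alpha> q n t)"
    using has_integral_le[OF ftc integrable_integral[OF fK_int[OF _ _ t0]] lb] assms e1 e0 val by auto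
  also have "\<dots> \<le> integral {0..\<mu>} (fK M \<alpha> q n t)"
    using e0 assms t0 by (intro integral_subset_le fK_int fK_nonneg ballI) auto
  finally show ?thesis using t0 by blast
qed

lemma K_unique:
  assumes "M > 0" "\<alpha> > 0" "q \<ge> 1" "\<mu> > 0" "real n + 1 \<le> \<alpha> * q" "A > 0" "C > 0"
  shows "\<exists>!t. t > 0 \<and> A * integral {0..\<mu>} (fK M \<alpha> q n t) = C"
proof -
  let ?K = "\<lambda>t. A * integral {0..\<mu>} (fK M \<alpha> q n t)"
  have q0: "q > 0" using assms by simp
  have mono: "?K t2 < ?K t1" if "0 < t1" "t1 < t2" for t1 t2
    using K_strict[of M \<alpha> q \<mu> t1 t2 n] assms that by simp
  obtain t2 where t2: "t2 > 0" "integral {0..\<mu>} (fK M \<alpha> q n t2) < C / A"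
    using K_large[of M \<alpha> q \<mu> "C / A" n] assms by auto
  obtain t1 where t1: "t1 > 0" "integral {0..\<mu>} (fK M \<alpha> q n t1) > C / A"
    using K_small[of M \<alpha> q \<mu> n "C / A"] assms by auto
  have K2: "?K t2 < C" using t2 assms by (simp add: field_simps)
  have K1: "?K t1 > C" using t1 assms by (simp add: field_simps)
  have lt: "t1 < t2"
  proof (rule ccontr)
    assume "\<not> t1 < t2"
    then have "t2 = t1 \<or> t2 < t1" by auto
    then have "?K t1 \<le> ?K t2" using mono[of t2 t1] t2 by auto
    then show False using K1 K2 by simp
  qed
  have "continuous_on {t1..t2} (\<lambda>t. integral {0..\<mu>} (fK M \<alpha> q n t))"
    by (rule continuous_on_subset[OF K_cont[of M \<alpha> \<mu> q n]]) (use assms t1 in auto)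
  then have cont: "continuous_on {t1..t2} ?K"
    by (auto intro!: continuous_intros)
  obtain t where t: "t \<ge> t1" "t \<le> t2" "?K t = C"
    using IVT2'[of ?K t2 C t1, OF _ _ _ cont] K1 K2 lt by auto
  show ?thesis
  proof (rule ex1I[of _ t])
    show "t > 0 \<and> ?K t = C" using t t1 by auto
    fix s assume s: "s > 0 \<and> ?K s = C"
    show "s = t"
    proof (rule ccontr)
      assume "s \<noteq> t"
      then have "s < t \<or> t < s" by auto
      then show False using mono[of s t] mono[of t s] s t t1 by auto
    qed
  qed
qed



lemma orth_inner:
  fixes Q :: "real^'n::finite^'n"
  assumes "orthogonal_matrix Q"
  shows "(Q *v a) \<bullet> (Q *v b) = a \<bullet> b"
proof -
  have "orthogonal_transformation ((*v) Q)"
    using assms by (simp add: orthogonal_transformation_matrix matrix_vector_mul_linear)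
  then show ?thesis unfolding orthogonal_transformation_def by blast
qed

lemma orth_norm:
  fixes Q :: "real^'n::finite^'n"
  assumes "orthogonal_matrix Q"
  shows "norm (Q *v a) = norm a"
  using orth_inner[OF assms, of a a] by (simp add: norm_eq_sqrt_inner)

lemma orth_inv:
  fixes Q :: "real^'n::finite^'n"
  assumes "orthogonal_matrix Q"
  shows "Q *v (transpose Q *v y) = y"
  by (metis assms matrix_vector_mul_assoc matrix_vector_mul_lid orthogonal_matrix_def)

lemma cone_V_open: "open (cone_V i0 r \<nu>)"
  unfolding cone_V_def
  by (intro open_Int open_ball open_Collect_less continuous_intros)

lemma cone_V_lmeas: "cone_V i0 r \<nu> \<in> lmeasurable"
  by (rule lmeasurable_open[OF _ cone_V_open]) (auto simp: cone_V_def)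

lemma cone_img:
  fixes Q :: "real^'n::finite^'n"
  assumes "orthogonal_matrix Q"
  shows "(\<lambda>w. p + Q *v w) ` cone_V i0 r \<nu>
       = {y. norm (y - p) < r \<and> (y - p) \<bullet> (Q *v axis i0 1) > \<nu> * norm (y - p)}"
proof (intro set_eqI iffI)
  fix y assume "y \<in> (\<lambda>w. p + Q *v w) ` cone_V i0 r \<nu>"
  then obtain w where w: "w \<in> cone_V i0 r \<nu>" "y = p + Q *v w" by auto
  have "(y - p) \<bullet> (Q *v axis i0 1) = w $ i0"
    using w orth_inner[OF assms, of w "axis i0 1"] by (simp add: inner_axis)
  then show "y \<in> {y. norm (y - p) < r \<and> (y - p) \<bullet> (Q *v axis i0 1) > \<nu> * norm (y - p)}"
    using w orth_norm[OF assms, of w] by (auto simp: cone_V_def)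
next
  fix y assume y: "y \<in> {y. norm (y - p) < r \<and> (y - p) \<bullet> (Q *v axis i0 1) > \<nu> * norm (y - p)}"
  define w where "w = transpose Q *v (y - p)"
  have Qw: "Q *v w = y - p" using orth_inv[OF assms] by (simp add: w_def)
  have nw: "norm w = norm (y - p)" using orth_norm[OF assms, of w] Qw by simp
  have "w $ i0 = (y - p) \<bullet> (Q *v axis i0 1)"
    using orth_inner[OF assms, of w "axis i0 1"] Qw by (simp add: inner_axis)
  then have "w \<in> cone_V i0 r \<nu>" using y nw by (auto simp: cone_V_def)
  moreover have "y = p + Q *v w" using Qw by simp
  ultimately show "y \<in> (\<lambda>w. p + Q *v w) ` cone_V i0 r \<nu>" by blast
qed

lemma cone_scale:
  assumes "\<mu> > 0" "r > 0"
  shows "cone_V i0 r \<nu> = (\<lambda>w. (r / \<mu>) *\<^sub>R w + 0) ` cone_V i0 \<mu> \<nu>"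
proof (intro set_eqI iffI)
  fix y assume y: "y \<in> cone_V i0 r \<nu>"
  define w where "w = (\<mu> / r) *\<^sub>R y"
  have nw: "norm w = (\<mu> / r) * norm y" using assms by (simp add: w_def)
  have wi: "w $ i0 = (\<mu> / r) * y $ i0" by (simp add: w_def)
  have p: "\<mu> / r > 0" using assms by simp
  have a1: "norm y < r" "\<nu> * norm y < y $ i0" using y by (auto simp: cone_V_def)
  have "(\<mu> / r) * norm y < (\<mu> / r) * r" by (rule mult_strict_left_mono[OF a1(1) p])
  moreover have "(\<mu> / r) * (\<nu> * norm y) < (\<mu> / r) * y $ i0" by (rule mult_strict_left_mono[OF a1(2) p])
  ultimately have "w \<in> cone_V i0 \<mu> \<nu>" using nw wi assms
    by (auto simp: cone_V_def mult.assoc[symmetric] mult.commute[of \<nu>])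
  moreover have "y = (r / \<mu>) *\<^sub>R w + 0" using assms by (simp add: w_def)
  ultimately show "y \<in> (\<lambda>w. (r / \<mu>) *\<^sub>R w + 0) ` cone_V i0 \<mu> \<nu>" by blast
next
  fix y assume "y \<in> (\<lambda>w. (r / \<mu>) *\<^sub>R w + 0) ` cone_V i0 \<mu> \<nu>"
  then obtain w where w: "w \<in> cone_V i0 \<mu> \<nu>" "y = (r / \<mu>) *\<^sub>R w" by auto
  have nw: "norm y = (r / \<mu>) * norm w" using assms w by simp
  have wi: "y $ i0 = (r / \<mu>) * w $ i0" using w by simp
  have p: "r / \<mu> > 0" using assms by simp
  have a1: "norm w < \<mu>" "\<nu> * norm w < w $ i0" using w by (auto simp: cone_V_def)
  have "(r / \<mu>) * norm w < (r / \<mu>) * \<mu>" by (rule mult_strict_left_mono[OF a1(1) p])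
  moreover have "(r / \<mu>) * (\<nu> * norm w) < (r / \<mu>) * w $ i0" by (rule mult_strict_left_mono[OF a1(2) p])
  ultimately show "y \<in> cone_V i0 r \<nu>" using nw wi assms
    by (auto simp: cone_V_def mult.assoc[symmetric] mult.commute[of \<nu>])
qed

lemma cone_W_meas:
  fixes Q :: "real^'n::finite^'n"
  assumes "orthogonal_matrix Q" "\<mu> > 0" "r > 0"
  shows "{y. norm (y - p) < r \<and> (y - p) \<bullet> (Q *v axis i0 1) > \<nu> * norm (y - p)} \<in> lmeasurable"
    and "measure lebesgue {y. norm (y - p) < r \<and> (y - p) \<bullet> (Q *v axis i0 1) > \<nu> * norm (y - p)}
         = (r / \<mu>) ^ CARD('n) * measure lebesgue (cone_V i0 \<mu> \<nu>)"
proof -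
  have img: "(\<lambda>w. p + Q *v w) ` cone_V i0 r \<nu> = (+) p ` ((*v) Q ` cone_V i0 r \<nu>)"
    by (auto simp: image_image)
  have m1: "(*v) Q ` cone_V i0 r \<nu> \<in> lmeasurable"
       "measure lebesgue ((*v) Q ` cone_V i0 r \<nu>) = measure lebesgue (cone_V i0 r \<nu>)"
    using measure_orth_image[OF assms(1) cone_V_lmeas] by auto
  show "{y. norm (y - p) < r \<and> (y - p) \<bullet> (Q *v axis i0 1) > \<nu> * norm (y - p)} \<in> lmeasurable"
    using cone_img[OF assms(1)] img measurable_translation[OF m1(1)] by metis
  have "measure lebesgue {y. norm (y - p) < r \<and> (y - p) \<bullet> (Q *v axis i0 1) > \<nu> * norm (y - p)}
      = measure lebesgue (cone_V i0 r \<nu>)"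
    using cone_img[OF assms(1)] img measure_translation m1(2) by metis
  also have "\<dots> = (r / \<mu>) ^ CARD('n) * measure lebesgue (cone_V i0 \<mu> \<nu>)"
    using cone_scale[OF assms(2,3), of i0 \<nu>] measure_lebesgue_affine[of "r / \<mu>" 0 "cone_V i0 \<mu> \<nu>"] assms
    by simp
  finally show "measure lebesgue {y. norm (y - p) < r \<and> (y - p) \<bullet> (Q *v axis i0 1) > \<nu> * norm (y - p)}
         = (r / \<mu>) ^ CARD('n) * measure lebesgue (cone_V i0 \<mu> \<nu>)" .
qed



lemma unit_case:
  fixes e v u :: "real^'n::finite"
  assumes "norm u = 1" "u \<bullet> v > \<nu>" "u \<bullet> e \<ge> 0" "0 < s" "s < \<mu>" "norm e = 1"
  shows "\<exists>w. norm w < \<mu> \<and> \<nu> * norm w < w \<bullet> v \<and> \<not> (norm (s *\<^sub>R e + w) \<le> \<mu>)"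
proof -
  define t where "t = \<mu> - s^2 / (4 * \<mu>)"
  have mu0: "\<mu> > 0" using assms by simp
  have "s^2 < \<mu>^2" using assms by (simp add: power_strict_mono)
  then have "s^2 / (4 * \<mu>) < \<mu>^2 / (4 * \<mu>)" using mu0 by (simp add: divide_strict_right_mono)
  also have "\<mu>^2 / (4 * \<mu>) = \<mu> / 4" using mu0 by (simp add: power2_eq_square)
  finally have "s^2 / (4 * \<mu>) < \<mu> / 4" .
  then have t0: "t > 0" unfolding t_def using mu0 by linarith
  have s2: "s^2 > 0" using assms by simp
  have tm: "t < \<mu>" using s2 mu0 by (simp add: t_def)
  have "t^2 = \<mu>^2 - s^2 / 2 + (s^2 / (4 * \<mu>))^2" using mu0
    by (simp add: t_def power2_eq_square field_simps)
  moreover have "(s^2 / (4 * \<mu>))^2 \<ge> 0" by simp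
  ultimately have tt: "\<mu>^2 - s^2 < t^2" using s2 by linarith
  have t: "t < \<mu>" by (rule tm)
  define w where "w = t *\<^sub>R u"
  have nw: "norm w = t" using assms t0 by (simp add: w_def)
  have "w \<bullet> v = t * (u \<bullet> v)" by (simp add: w_def)
  then have wv: "\<nu> * norm w < w \<bullet> v" using nw t0 assms by simp
  have "(norm (s *\<^sub>R e + w))^2 = (s *\<^sub>R e + w) \<bullet> (s *\<^sub>R e + w)"
    by (simp add: power2_norm_eq_inner)
  also have "\<dots> = s^2 * (e \<bullet> e) + 2 * s * t * (u \<bullet> e) + t^2 * (u \<bullet> u)"
    by (simp add: w_def power2_norm_eq_inner inner_add_left inner_add_right algebra_simps
        power2_eq_square inner_commute)
  also have "\<dots> = s^2 + 2 * s * t * (u \<bullet> e) + t^2"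
    using assms by (simp add: power2_norm_eq_inner[symmetric])
  also have "\<dots> \<ge> s^2 + t^2" using assms t0 by simp
  finally have "(norm (s *\<^sub>R e + w))^2 > \<mu>^2" using tt by linarith
  then have "norm (s *\<^sub>R e + w) > \<mu>" using assms
    by (meson norm_ge_zero power2_less_imp_less)
  then show ?thesis using nw t wv by (intro exI[of _ w]) auto
qed

lemma geo_vec:
  fixes e v :: "real^'n::finite"
  assumes ne: "norm e = 1" and nv: "norm v = 1" and mu: "\<mu> > 0" and nu: "\<nu> < 1"
    and s: "s = (if \<nu> > 0 then \<nu> * \<mu> / (2 * (1 + \<nu>)) else \<mu> / 2)"
    and one: "CARD('n) = 1 \<Longrightarrow> v = e"
    and i0: "(i0::'n) = i0"
  shows "\<exists>w. norm w < \<mu> \<and> \<nu> * norm w < w \<bullet> v \<and>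
            \<not> (norm (s *\<^sub>R e + w) \<le> \<mu> \<and> \<nu> * norm (s *\<^sub>R e + w) \<le> (s *\<^sub>R e + w) \<bullet> e)"
proof -
  have s01: "0 < s \<and> s < \<mu>"
  proof (cases "\<nu> > 0")
    case True
    then have d: "2 * (1 + \<nu>) > 0" by simp
    have "\<mu> * (2 + \<nu>) > 0" using True mu by simp
    moreover have "\<mu> * (2 * (1 + \<nu>)) - \<nu> * \<mu> = \<mu> * (2 + \<nu>)" by (simp add: algebra_simps)
    ultimately have "\<nu> * \<mu> < \<mu> * (2 * (1 + \<nu>))" by linarith
    then have "\<nu> * \<mu> / (2 * (1 + \<nu>)) < \<mu>" using d by (simp add: pos_divide_less_eq)
    moreover have "\<nu> * \<mu> / (2 * (1 + \<nu>)) > 0" using True mu d by simp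
    ultimately show ?thesis using s True by simp
  next
    case False
    then show ?thesis using s mu by simp
  qed
  then have s0: "0 < s" and s1: "s < \<mu>" by auto
  have ee: "e \<bullet> e = 1" and vv: "v \<bullet> v = 1"
    using ne nv by (simp_all add: power2_norm_eq_inner[symmetric])
  let ?c = "v \<bullet> e"
  show ?thesis
  proof (cases "?c \<ge> 0")
    case True
    then show ?thesis using unit_case[OF nv _ _ s0 s1 ne, where v=v and \<nu>=\<nu>] vv nu by auto
  next
    case False
    note c = False
    show ?thesis
    proof (cases "\<nu> > 0")
      case True
      have ss: "s * (1 + \<nu>) = \<nu> * (\<mu> / 2)" using s True by (simp add: field_simps)
      define w where "w = (\<mu> / 2) *\<^sub>R v"
      have nw: "norm w = \<mu> / 2" using nv mu by (simp add: w_def)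
      have wv: "w \<bullet> v = \<mu> / 2" using vv by (simp add: w_def)
      have "norm (s *\<^sub>R e + w) \<ge> norm w - norm (s *\<^sub>R e)" using norm_diff_ineq[of w "s *\<^sub>R e"] by (simp add: add.commute)
      then have n1: "norm (s *\<^sub>R e + w) \<ge> \<mu> / 2 - s" using nw ne s0 by simp
      have "(s *\<^sub>R e + w) \<bullet> e = s + (\<mu> / 2) * ?c" using ee by (simp add: w_def inner_add_left)
      also have "\<dots> < s" using c mu by (simp add: mult_pos_neg)
      also have "s = \<nu> * (\<mu> / 2 - s)" using ss by (simp add: algebra_simps)
      also have "\<dots> \<le> \<nu> * norm (s *\<^sub>R e + w)" using True n1 by (intro mult_left_mono) auto
      finally show ?thesis using nw wv mu True nu
        by (intro exI[of _ w]) auto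
    next
      case False
      note nu0 = False
      show ?thesis
      proof (cases "?c = -1")
        case False
        define u0 where "u0 = v + e"
        have "(norm u0)^2 = 2 + 2 * ?c" using ee vv
          by (simp add: u0_def power2_norm_eq_inner inner_add_left inner_add_right inner_commute)
        moreover have "?c > -1"
        proof -
          have "?c \<ge> -1" using norm_cauchy_schwarz[of "-v" e] ne nv by auto
          then show ?thesis using False by simp
        qed
        ultimately have "(norm u0)^2 > 0" by simp
        then have "norm u0 \<noteq> 0" by auto
        then have nu0p: "norm u0 > 0" using norm_ge_zero[of u0] by linarith
        define u where "u = u0 /\<^sub>R norm u0"
        have nu: "norm u = 1" using nu0p by (simp add: u_def)
        have u0v: "u0 \<bullet> v = 1 + ?c" using vv by (simp add: u0_def inner_add_left inner_commute[of e v])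
        have u0e: "u0 \<bullet> e = 1 + ?c" using ee by (simp add: u0_def inner_add_left)
        have uv: "u \<bullet> v = (1 + ?c) / norm u0" using u0v by (simp add: u_def divide_inverse mult.commute)
        have ue: "u \<bullet> e = (1 + ?c) / norm u0" using u0e by (simp add: u_def divide_inverse mult.commute)
        have pos: "(1 + ?c) / norm u0 > 0" using nu0p \<open>?c > -1\<close> by simp
        show ?thesis using unit_case[OF nu _ _ s0 s1 ne, where v=v and \<nu>=\<nu>] uv ue pos nu0 by auto
      next
        case True
        note cm1 = True
        have ve: "v = - e"
        proof -
          have "(norm (v + e))^2 = 0" using ee vv True
            by (simp add: power2_norm_eq_inner inner_add_left inner_add_right inner_commute)
          then show ?thesis by (simp add: add_eq_0_iff2)
        qed
        show ?thesis
        proof (cases "\<nu> > -1")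
          case True
          define t where "t = (\<mu> + s) / 2"
          have t: "s < t" "t < \<mu>" using s0 s1 by (auto simp: t_def)
          define w where "w = t *\<^sub>R v"
          have nw: "norm w = t" using nv t s0 by (simp add: w_def)
          have wv: "w \<bullet> v = t" using vv by (simp add: w_def)
          have sw: "s *\<^sub>R e + w = (s - t) *\<^sub>R e" using ve by (simp add: w_def algebra_simps)
          have n2: "norm (s *\<^sub>R e + w) = t - s" using sw ne t by simp
          have i2: "(s *\<^sub>R e + w) \<bullet> e = s - t" using sw ee by simp
          have "(1 + \<nu>) * (t - s) > 0" using True t by simp
          moreover have "(1 + \<nu>) * (t - s) = (t - s) + \<nu> * (t - s)" by (simp add: algebra_simps)
          ultimately have "s - t < \<nu> * (t - s)" by linarith
          then show ?thesis using nw wv t nu s0 n2 i2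
            by (intro exI[of _ w]) (auto simp: mult_less_cancel_right1)
        next
          case False
          have "CARD('n) \<noteq> 1"
          proof
            assume "CARD('n) = 1"
            then have "v = e" by (rule one)
            then have eqm: "e = - e" using ve by simp
            have "e $ k = 0" for k
            proof -
              have "e $ k = (- e) $ k" using arg_cong[where f="\<lambda>x. x $ k", OF eqm] .
              then show ?thesis by simp
            qed
            then have "e = 0" by (simp add: vec_eq_iff)
            then show False using ne by simp
          qed
          then have "UNIV \<noteq> {i0}" by (metis card.empty card_insert_disjoint empty_iff finite.emptyI One_nat_def)
          then obtain j :: 'n where j: "j \<noteq> i0" by auto
          define u1 where "u1 = (e $ j) *\<^sub>R axis i0 (1::real) - (e $ i0) *\<^sub>R axis j 1"
          have u1e: "u1 \<bullet> e = 0" by (simp add: u1_def inner_diff_left inner_axis')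
          obtain u0 where u0: "u0 \<noteq> 0" "u0 \<bullet> e = 0"
          proof (cases "u1 = 0")
            case False then show ?thesis using that u1e by blast
          next
            case True
            then have "u1 $ j = 0" by simp
            then have "e $ i0 = 0" using j by (simp add: u1_def axis_def)
            then have "axis i0 1 \<bullet> e = 0" by (simp add: inner_axis')
            then show ?thesis using that[of "axis i0 1"] by (simp add: axis_eq_0_iff)
          qed
          define u where "u = u0 /\<^sub>R norm u0"
          have nu: "norm u = 1" using u0 by (simp add: u_def)
          have ue: "u \<bullet> e = 0" using u0 by (simp add: u_def)
          have uv: "u \<bullet> v = 0" using ue ve by simp
          show ?thesis using unit_case[OF nu _ _ s0 s1 ne, where v=v and \<nu>=\<nu>] uv ue nu0 False by auto
        qed
      qed
    qed
  qed
qed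



lemma power_has_integral:
  fixes a b :: real
  assumes "a \<le> b" "n \<ge> 1"
  shows "((\<lambda>t. t ^ (n - 1)) has_integral (b ^ n - a ^ n) / real n) {a..b}"
proof -
  have "((\<lambda>t. t ^ (n - 1)) has_integral (b ^ n / real n - a ^ n / real n)) {a..b}"
  proof (rule fundamental_theorem_of_calculus[where f = "\<lambda>t. t ^ n / real n"])
    show "a \<le> b" by fact
    fix x assume "x \<in> {a..b}"
    have "((\<lambda>t. t ^ n / real n) has_real_derivative (real n * x ^ (n - 1)) / real n) (at x within {a..b})"
      by (auto intro!: derivative_eq_intros)
    moreover have "(real n * x ^ (n - 1)) / real n = x ^ (n - 1)" using assms by simp
    ultimately show "((\<lambda>t. t ^ n / real n) has_vector_derivative x ^ (n - 1)) (at x within {a..b})"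
      by (simp add: has_real_derivative_iff_has_vector_derivative)
  qed
  then show ?thesis by (simp add: diff_divide_distrib)
qed

lemma pow_diff_le:
  fixes a b :: real
  assumes "0 \<le> a" "a \<le> b"
  shows "b ^ n - a ^ n \<le> real n * b ^ (n - 1) * (b - a)"
proof -
  have "b ^ n - a ^ n = (b - a) * (\<Sum>i<n. a ^ (n - Suc i) * b ^ i)" by (rule power_diff_sumr2)
  also have "(\<Sum>i<n. a ^ (n - Suc i) * b ^ i) \<le> (\<Sum>i<n. b ^ (n - 1))"
  proof (rule sum_mono)
    fix i assume i: "i \<in> {..<n}"
    have "a ^ (n - Suc i) * b ^ i \<le> b ^ (n - Suc i) * b ^ i"
      using assms by (intro mult_right_mono power_mono) auto
    also have "\<dots> = b ^ (n - 1)" using i by (simp add: power_add[symmetric])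
    finally show "a ^ (n - Suc i) * b ^ i \<le> b ^ (n - 1)" .
  qed
  then have "(b - a) * (\<Sum>i<n. a ^ (n - Suc i) * b ^ i) \<le> (b - a) * (\<Sum>i<n. b ^ (n - 1))"
    using assms by (intro mult_left_mono) auto
  finally show ?thesis by (simp add: algebra_simps)
qed

lemma riemann_upper:
  fixes h :: "real \<Rightarrow> real" and \<mu> :: real and N d :: nat
  assumes mu: "\<mu> > 0" and N: "N > 0" and d: "d \<ge> 1"
    and cont: "continuous_on {0..\<mu>} h"
    and anti: "\<And>a b. 0 \<le> a \<Longrightarrow> a \<le> b \<Longrightarrow> b \<le> \<mu> \<Longrightarrow> h b \<le> h a"
  shows "real d * integral {0..\<mu>} (\<lambda>t. h t * t ^ (d - 1))
           \<le> (\<Sum>k<N. h (\<mu> * real k / real N) * ((\<mu> * real (Suc k) / real N) ^ d - (\<mu> * real k / real N) ^ d))"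
proof -
  define r where "r = (\<lambda>k::nat. \<mu> * real k / real N)"
  define F where "F = (\<lambda>t. h t * t ^ (d - 1))"
  have rmono: "r k \<le> r m" if "k \<le> m" for k m
    unfolding r_def using that mu N by (intro divide_right_mono mult_left_mono) auto
  have r0: "r 0 = 0" by (simp add: r_def)
  have rN: "r N = \<mu>" using N by (simp add: r_def)
  have rnn: "r k \<ge> 0" for k using mu N by (simp add: r_def)
  have rle: "r k \<le> \<mu>" if "k \<le> N" for k using rmono[OF that] rN by simp
  have contF: "continuous_on {0..\<mu>} F" unfolding F_def by (intro continuous_intros cont)
  have intF: "F integrable_on {a..b}" if "0 \<le> a" "b \<le> \<mu>" for a b
  proof (cases "a \<le> b")
    case True
    have "continuous_on {a..b} F" by (rule continuous_on_subset[OF contF]) (use that in auto)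
    then show ?thesis by (rule integrable_continuous_interval)
  next
    case False
    then have "{a..b} = {}" by simp
    then show ?thesis by (simp add: integrable_on_empty)
  qed
  have split: "integral {0..r m} F = (\<Sum>k<m. integral {r k..r (Suc k)} F)" if "m \<le> N" for m
    using that
  proof (induction m)
    case 0 then show ?case by (simp add: r0)
  next
    case (Suc m)
    have "integral {0..r m} F + integral {r m..r (Suc m)} F = integral {0..r (Suc m)} F"
      using Henstock_Kurzweil_Integration.integral_combine[where a=0 and c="r m" and b="r (Suc m)" and f=F] rnn[of m] rmono[of m "Suc m"]
        intF[of 0 "r (Suc m)"] rle[of "Suc m"] Suc.prems by simp
    then show ?case using Suc by simp
  qed
  have piece: "real d * integral {r k..r (Suc k)} F \<le> h (r k) * (r (Suc k) ^ d - r k ^ d)"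
    if k: "k < N" for k
  proof -
    have hp: "((\<lambda>t. h (r k) * t ^ (d - 1)) has_integral h (r k) * ((r (Suc k) ^ d - r k ^ d) / real d)) {r k..r (Suc k)}"
      using power_has_integral[OF rmono[of k "Suc k"] d] by (intro has_integral_mult_right) auto
    have "integral {r k..r (Suc k)} F \<le> h (r k) * ((r (Suc k) ^ d - r k ^ d) / real d)"
    proof (rule has_integral_le[OF integrable_integral hp])
      show "F integrable_on {r k..r (Suc k)}" using k by (intro intF rnn rle) auto
      fix t assume t: "t \<in> {r k..r (Suc k)}"
      have "h t \<le> h (r k)" using t rle[of "Suc k"] k rnn[of k] by (intro anti) auto
      then show "F t \<le> h (r k) * t ^ (d - 1)" unfolding F_def
        using t rnn[of k] by (intro mult_right_mono) auto
    qed
    then have "real d * integral {r k..r (Suc k)} F \<le> real d * (h (r k) * ((r (Suc k) ^ d - r k ^ d) / real d))"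
      using d by (intro mult_left_mono) auto
    also have "\<dots> = h (r k) * (r (Suc k) ^ d - r k ^ d)" using d by simp
    finally show ?thesis .
  qed
  have "real d * integral {0..\<mu>} F = real d * (\<Sum>k<N. integral {r k..r (Suc k)} F)"
    using split[of N] rN by simp
  also have "\<dots> = (\<Sum>k<N. real d * integral {r k..r (Suc k)} F)" by (simp add: sum_distrib_left)
  also have "\<dots> \<le> (\<Sum>k<N. h (r k) * (r (Suc k) ^ d - r k ^ d))"
    by (rule sum_mono) (use piece in auto)
  finally show ?thesis by (simp add: F_def r_def)
qed

lemma riemann_gap:
  fixes h :: "real \<Rightarrow> real" and \<mu> :: real and N d :: nat
  assumes mu: "\<mu> > 0" and N: "N > 0" and d: "d \<ge> 1"
    and anti: "\<And>a b. 0 \<le> a \<Longrightarrow> a \<le> b \<Longrightarrow> b \<le> \<mu> \<Longrightarrow> h b \<le> h a"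
    and hnn: "\<And>a. 0 \<le> a \<Longrightarrow> a \<le> \<mu> \<Longrightarrow> h a \<ge> 0"
  shows "(\<Sum>k<N. (h (\<mu> * real k / real N) - h (\<mu> * real (Suc k) / real N)) *
                 ((\<mu> * real (Suc k) / real N) ^ d - (\<mu> * real k / real N) ^ d))
          \<le> real d * \<mu> ^ d / real N * h 0"
proof -
  define r where "r = (\<lambda>k::nat. \<mu> * real k / real N)"
  have rmono: "r k \<le> r m" if "k \<le> m" for k m
    unfolding r_def using that mu N by (intro divide_right_mono mult_left_mono) auto
  have r0: "r 0 = 0" by (simp add: r_def)
  have rN: "r N = \<mu>" using N by (simp add: r_def)
  have rnn: "r k \<ge> 0" for k using mu N by (simp add: r_def)
  have rle: "r k \<le> \<mu>" if "k \<le> N" for k using rmono[OF that] rN by simp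
  have step: "r (Suc k) - r k = \<mu> / real N" for k
    unfolding r_def diff_divide_distrib[symmetric] by (simp add: algebra_simps)
  have D: "r (Suc k) ^ d - r k ^ d \<le> real d * \<mu> ^ d / real N" if "k < N" for k
  proof -
    have "r (Suc k) ^ d - r k ^ d \<le> real d * r (Suc k) ^ (d - 1) * (r (Suc k) - r k)"
      by (rule pow_diff_le) (auto simp: rnn rmono)
    also have "\<dots> \<le> real d * \<mu> ^ (d - 1) * (\<mu> / real N)"
      unfolding step using that rle[of "Suc k"] rnn mu N
      by (intro mult_right_mono mult_left_mono power_mono) auto
    also have "\<dots> = real d * \<mu> ^ d / real N"
      using d by (simp add: power_eq_if[of \<mu> d])
    finally show ?thesis .
  qed
  have "(\<Sum>k<N. (h (r k) - h (r (Suc k))) * (r (Suc k) ^ d - r k ^ d))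
        \<le> (\<Sum>k<N. (h (r k) - h (r (Suc k))) * (real d * \<mu> ^ d / real N))"
  proof (rule sum_mono)
    fix k assume k: "k \<in> {..<N}"
    have "h (r (Suc k)) \<le> h (r k)" using k by (intro anti rnn rmono rle) auto
    then show "(h (r k) - h (r (Suc k))) * (r (Suc k) ^ d - r k ^ d)
              \<le> (h (r k) - h (r (Suc k))) * (real d * \<mu> ^ d / real N)"
      using D[of k] k by (intro mult_left_mono) auto
  qed
  also have "\<dots> = (h (r 0) - h (r N)) * (real d * \<mu> ^ d / real N)"
    unfolding sum_distrib_right[symmetric] by (simp only: sum_lessThan_telescope'[of "\<lambda>k. h (r k)"])
  also have "\<dots> \<le> h 0 * (real d * \<mu> ^ d / real N)"
    using hnn[of "r N"] rN mu r0 by (intro mult_right_mono) auto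
  finally show ?thesis by (simp add: r_def mult.commute)
qed



lemma Wr_meas:
  fixes Q :: "real^'n::finite^'n"
  assumes "orthogonal_matrix Q" "\<mu> > 0" "\<rho> \<ge> 0"
  shows "{y. norm (y - p) < \<rho> \<and> (y - p) \<bullet> (Q *v axis i0 1) > \<nu> * norm (y - p)} \<in> lmeasurable"
    and "measure lebesgue {y. norm (y - p) < \<rho> \<and> (y - p) \<bullet> (Q *v axis i0 1) > \<nu> * norm (y - p)}
         = (\<rho> / \<mu>) ^ CARD('n) * measure lebesgue (cone_V i0 \<mu> \<nu>)"
proof -
  have "\<rho> > 0 \<or> \<rho> = 0" using assms by auto
  then have "{y. norm (y - p) < \<rho> \<and> (y - p) \<bullet> (Q *v axis i0 1) > \<nu> * norm (y - p)} \<in> lmeasurable \<and>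
    measure lebesgue {y. norm (y - p) < \<rho> \<and> (y - p) \<bullet> (Q *v axis i0 1) > \<nu> * norm (y - p)}
         = (\<rho> / \<mu>) ^ CARD('n) * measure lebesgue (cone_V i0 \<mu> \<nu>)"
  proof
    assume "\<rho> > 0"
    then show ?thesis using cone_W_meas[OF assms(1,2)] by blast
  next
    assume r: "\<rho> = 0"
    have "{y. norm (y - p) < \<rho> \<and> (y - p) \<bullet> (Q *v axis i0 1) > \<nu> * norm (y - p)} = {}"
      using r by auto
    moreover have "CARD('n) \<noteq> 0" by simp
    ultimately show ?thesis using r by simp
  qed
  then show "{y. norm (y - p) < \<rho> \<and> (y - p) \<bullet> (Q *v axis i0 1) > \<nu> * norm (y - p)} \<in> lmeasurable"
    and "measure lebesgue {y. norm (y - p) < \<rho> \<and> (y - p) \<bullet> (Q *v axis i0 1) > \<nu> * norm (y - p)}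
         = (\<rho> / \<mu>) ^ CARD('n) * measure lebesgue (cone_V i0 \<mu> \<nu>)" by auto
qed

lemma shell_lower:
  fixes Q :: "real^'n::finite^'n" and x :: "real^'n" and h :: "real \<Rightarrow> real"
  assumes oQ: "orthogonal_matrix Q" and mu: "\<mu> > 0" and N: "N > 0"
    and hnn: "\<And>a. 0 \<le> a \<Longrightarrow> a \<le> \<mu> \<Longrightarrow> h a \<ge> 0"
    and anti: "\<And>a b. 0 \<le> a \<Longrightarrow> a \<le> b \<Longrightarrow> b \<le> \<mu> \<Longrightarrow> h b \<le> h a"
  shows "\<exists>\<phi>. \<phi> \<in> borel_measurable lebesgue \<and>
     (\<forall>y. \<phi> y \<le> ennreal (h (norm (y - x))) *
            indicator {y. norm (y - x) < \<mu> \<and> (y - x) \<bullet> (Q *v axis i0 1) > \<nu> * norm (y - x)} y) \<and>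
     integral\<^sup>N lebesgue \<phi> = ennreal (measure lebesgue (cone_V i0 \<mu> \<nu>) / \<mu> ^ CARD('n) *
        (\<Sum>k<N. h (\<mu> * real (Suc k) / real N) *
           ((\<mu> * real (Suc k) / real N) ^ CARD('n) - (\<mu> * real k / real N) ^ CARD('n))))"
proof -
  define e where "e = Q *v axis i0 1"
  define Wr where "Wr = (\<lambda>\<rho>. {y. norm (y - x) < \<rho> \<and> (y - x) \<bullet> e > \<nu> * norm (y - x)})"
  define r where "r = (\<lambda>k::nat. \<mu> * real k / real N)"
  define vol where "vol = measure lebesgue (cone_V i0 \<mu> \<nu>)"
  define d where "d = CARD('n)"
  define S where "S = (\<lambda>k. Wr (r (Suc k)) - Wr (r k))"
  have rmono: "r k \<le> r m" if "k \<le> m" for k m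
    unfolding r_def using that mu N by (intro divide_right_mono mult_left_mono) auto
  have rN: "r N = \<mu>" using N by (simp add: r_def)
  have rnn: "r k \<ge> 0" for k using mu N by (simp add: r_def)
  have rle: "r k \<le> \<mu>" if "k \<le> N" for k using rmono[OF that] rN by simp
  have Wl: "Wr \<rho> \<in> lmeasurable" if "\<rho> \<ge> 0" for \<rho>
    using Wr_meas(1)[OF oQ mu that] by (simp add: Wr_def e_def)
  have Wm: "measure lebesgue (Wr \<rho>) = (\<rho> / \<mu>) ^ d * vol" if "\<rho> \<ge> 0" for \<rho>
    using Wr_meas(2)[OF oQ mu that] by (simp add: Wr_def e_def vol_def d_def)
  have Wsub: "Wr a \<subseteq> Wr b" if "a \<le> b" for a b using that by (auto simp: Wr_def)
  have vol0: "vol \<ge> 0" by (simp add: vol_def)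
  have Sl: "S k \<in> lmeasurable" for k
    unfolding S_def using Wl[OF rnn[of k]] by (intro fmeasurable_Diff Wl rnn) (auto simp: fmeasurable_def)
  have Sm: "measure lebesgue (S k) = vol / \<mu> ^ d * (r (Suc k) ^ d - r k ^ d)" for k
  proof -
    have a1: "emeasure lebesgue (Wr (r (Suc k))) \<noteq> \<infinity>" using fmeasurableD2[OF Wl[OF rnn]] by (simp add: infinity_ennreal_def)
    have a2: "Wr (r (Suc k)) \<in> sets lebesgue" using fmeasurableD[OF Wl[OF rnn]] .
    have a3: "Wr (r k) \<in> sets lebesgue" using fmeasurableD[OF Wl[OF rnn]] .
    have a4: "Wr (r k) \<subseteq> Wr (r (Suc k))" using Wsub rmono by simp
    have "measure lebesgue (S k) = measure lebesgue (Wr (r (Suc k))) - measure lebesgue (Wr (r k))"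
      unfolding S_def by (rule measure_Diff) (rule a1, rule a2, rule a3, rule a4)
    also have "\<dots> = vol / \<mu> ^ d * (r (Suc k) ^ d - r k ^ d)"
      using Wm[OF rnn] by (simp add: power_divide algebra_simps diff_divide_distrib)
    finally show ?thesis .
  qed
  have Snn: "vol / \<mu> ^ d * (r (Suc k) ^ d - r k ^ d) \<ge> 0" for k
  proof -
    have "r k ^ d \<le> r (Suc k) ^ d" using rmono[of k "Suc k"] rnn[of k] by (intro power_mono) auto
    then show ?thesis using vol0 mu by (intro mult_nonneg_nonneg divide_nonneg_pos) auto
  qed
  define \<phi> where "\<phi> = (\<lambda>y. \<Sum>k<N. ennreal (h (r (Suc k))) * indicator (S k) y)"
  have meas: "\<phi> \<in> borel_measurable lebesgue"
  proof -
    have [measurable]: "S k \<in> sets lebesgue" for k using Sl[of k] by (rule fmeasurableD)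
    show ?thesis unfolding \<phi>_def by measurable
  qed
  have int: "integral\<^sup>N lebesgue \<phi> = (\<Sum>k<N. ennreal (h (r (Suc k))) * emeasure lebesgue (S k))"
  proof -
    have [measurable]: "S k \<in> sets lebesgue" for k using Sl[of k] by (rule fmeasurableD)
    have "integral\<^sup>N lebesgue (\<lambda>y. \<Sum>k<N. ennreal (h (r (Suc k))) * indicator (S k) y)
        = (\<Sum>k<N. integral\<^sup>N lebesgue (\<lambda>y. ennreal (h (r (Suc k))) * indicator (S k) y))"
      by (rule nn_integral_sum) measurable
    also have "\<dots> = (\<Sum>k<N. ennreal (h (r (Suc k))) * emeasure lebesgue (S k))"
      by (intro sum.cong refl nn_integral_cmult_indicator) measurable
    finally show ?thesis by (simp add: \<phi>_def)
  qed
  also have "\<dots> = (\<Sum>k<N. ennreal (h (r (Suc k)) * (vol / \<mu> ^ d * (r (Suc k) ^ d - r k ^ d))))"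
  proof (rule sum.cong[OF refl])
    fix k assume k: "k \<in> {..<N}"
    have emeq: "emeasure lebesgue (S k) = ennreal (vol / \<mu> ^ d * (r (Suc k) ^ d - r k ^ d))"
      using emeasure_eq_measure2[OF Sl[of k]] Sm by simp
    show "ennreal (h (r (Suc k))) * emeasure lebesgue (S k) = ennreal (h (r (Suc k)) * (vol / \<mu> ^ d * (r (Suc k) ^ d - r k ^ d)))"
      by (simp only: emeq ennreal_mult''[OF Snn[of k]])
  qed
  also have "\<dots> = ennreal (\<Sum>k<N. h (r (Suc k)) * (vol / \<mu> ^ d * (r (Suc k) ^ d - r k ^ d)))"
  proof (rule sum_ennreal)
    fix k assume "k \<in> {..<N}"
    then have "h (r (Suc k)) \<ge> 0" using hnn rnn rle by auto
    then show "0 \<le> h (r (Suc k)) * (vol / \<mu> ^ d * (r (Suc k) ^ d - r k ^ d))"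
      using Snn[of k] by (rule mult_nonneg_nonneg)
  qed
  also have "(\<Sum>k<N. h (r (Suc k)) * (vol / \<mu> ^ d * (r (Suc k) ^ d - r k ^ d)))
     = vol / \<mu> ^ d * (\<Sum>k<N. h (r (Suc k)) * (r (Suc k) ^ d - r k ^ d))"
    by (simp add: sum_distrib_left algebra_simps)
  finally have intv: "integral\<^sup>N lebesgue \<phi> = ennreal (vol / \<mu> ^ d * (\<Sum>k<N. h (r (Suc k)) * (r (Suc k) ^ d - r k ^ d)))" .
  have pw: "\<phi> y \<le> ennreal (h (norm (y - x))) * indicator (Wr \<mu>) y" for y
  proof (cases "\<exists>k<N. y \<in> S k")
    case True
    then obtain k where k: "k < N" "y \<in> S k" by blast
    have uniq: "y \<notin> S j" if "j \<noteq> k" for j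
    proof
      assume yj: "y \<in> S j"
      have "j < k \<or> k < j" using that by auto
      then show False
      proof
        assume "j < k"
        then have "r (Suc j) \<le> r k" by (intro rmono) auto
        then show False using yj k by (auto simp: S_def Wr_def)
      next
        assume "k < j"
        then have "r (Suc k) \<le> r j" by (intro rmono) auto
        then show False using yj k by (auto simp: S_def Wr_def)
      qed
    qed
    have "\<phi> y = (\<Sum>j<N. if j = k then ennreal (h (r (Suc k))) else 0)"
      unfolding \<phi>_def by (rule sum.cong) (use k uniq in auto)
    also have "\<dots> = ennreal (h (r (Suc k)))" using k by simp
    finally have py: "\<phi> y = ennreal (h (r (Suc k)))" .
    have yW: "y \<in> Wr \<mu>" using k Wsub[OF rle[of "Suc k"]] by (auto simp: S_def)
    have n1: "norm (y - x) < r (Suc k)" and n0: "r k \<le> norm (y - x)"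
      using k by (auto simp: S_def Wr_def)
    have "h (r (Suc k)) \<le> h (norm (y - x))"
      using n1 n0 rnn[of k] rle[of "Suc k"] k by (intro anti) auto
    then show ?thesis using py yW by (simp add: ennreal_leI)
  next
    case False
    then have "\<phi> y = 0" unfolding \<phi>_def by (intro sum.neutral) auto
    then show ?thesis by simp
  qed
  show ?thesis
    using meas pw intv by (intro exI[of _ \<phi>]) (simp add: Wr_def e_def vol_def d_def r_def)
qed



lemma card1_rot:
  fixes R :: "real^'n::finite^'n"
  assumes "CARD('n) = 1" "det R = 1"
  shows "R *v axis i0 1 = axis i0 1"
proof -
  have all: "j = i0" for j :: 'n
    using assms(1) by (metis UNIV_I card_1_singletonE singletonD)
  have U: "(UNIV :: 'n set) = {i0}" using all by auto
  have "det R = (\<Prod>i\<in>UNIV. R$i$i)"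
    by (rule det_diagonal) (metis all)
  also have "\<dots> = R$i0$i0" by (simp add: U)
  finally have "det R = R$i0$i0" .
  then have r: "R$i0$i0 = 1" using assms by simp
  have h: "(R *v axis i0 1) $ i0 = 1" by (simp add: matrix_vector_mult_def U r axis_def)
  show ?thesis
  proof (subst vec_eq_iff, intro allI)
    fix i :: 'n
    have "i = i0" by (rule all)
    then show "(R *v axis i0 1) $ i = axis i0 1 $ i" using h by simp
  qed
qed

lemma ball_meas_pos:
  fixes z :: "'a::euclidean_space"
  assumes "r > 0"
  shows "measure lebesgue (ball z r) > 0"
proof -
  have "measure lebesgue (ball z r) = measure lborel (ball z r)"
    by (rule measure_completion) simp
  then show ?thesis using content_ball_pos[OF assms] by simp
qed

lemma cone_V_pos:
  assumes "\<mu> > 0" "\<nu> < 1"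
  shows "measure lebesgue (cone_V i0 \<mu> \<nu>) > 0"
proof -
  define c :: "real^'a::finite" where "c = (\<mu> / 2) *\<^sub>R axis i0 1"
  have "norm c = \<mu> / 2" using assms by (simp add: c_def)
  moreover have "c $ i0 = \<mu> / 2" by (simp add: c_def)
  ultimately have "c \<in> cone_V i0 \<mu> \<nu>" using assms by (auto simp: cone_V_def)
  then obtain \<rho> where \<rho>: "\<rho> > 0" "ball c \<rho> \<subseteq> cone_V i0 \<mu> \<nu>"
    using cone_V_open openE by metis
  have "measure lebesgue (ball c \<rho>) \<le> measure lebesgue (cone_V i0 \<mu> \<nu>)"
    by (rule measure_mono_fmeasurable[OF \<rho>(2)]) (auto intro: cone_V_lmeas)
  then show ?thesis using ball_meas_pos[OF \<rho>(1), of c] by linarith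
qed



theorem lemma4p11:
  fixes \<Omega> :: "(real ^ 'n) set" and i0 :: 'n
    and \<mu> \<nu> \<alpha> q M C :: real and J :: "real ^ 'n \<Rightarrow> real"
  defines "d \<equiv> CARD('n)"
  defines "volV \<equiv> measure lebesgue (cone_V i0 \<mu> \<nu>)"
  defines "\<delta> \<equiv> THE t. t > 0 \<and> kappa d volV \<mu> M \<alpha> q t = C"
  assumes dom: "open \<Omega>" "connected \<Omega>" "bounded \<Omega>"
    and cone: "\<mu> > 0" "\<nu> < 1" "interior_cone_property \<Omega> i0 \<mu> \<nu>"
    and alpha: "0 < \<alpha>" "\<alpha> < 1"
    and holder: "holder_continuous_on \<alpha> \<Omega> J"
    and q: "q \<ge> real d / \<alpha>"
    and MC: "M > 0" "C > 0"
    and int_bound: "(\<integral>\<^sup>+ x\<in>\<Omega>. ennreal ((max \<delta> (J x)) powr (-q)) \<partial>lebesgue) \<le> ennreal C"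
    and seminorm: "\<forall>x1\<in>\<Omega>. \<forall>x2\<in>\<Omega>. dist x1 x2 < \<mu> \<longrightarrow>
                     \<bar>J x1 - J x2\<bar> \<le> M * dist x1 x2 powr \<alpha>"
  shows "\<delta> > 0 \<and> (\<forall>x\<in>\<Omega>. J x > \<delta>)"
proof -
  have d1: "d \<ge> 1" by (simp add: d_def Suc_le_eq)
  have volpos: "volV > 0" using cone_V_pos[OF cone(1,2)] by (simp add: volV_def)
  have dq: "real d \<le> \<alpha> * q" using q alpha by (simp add: divide_le_eq mult.commute)
  have q1: "q \<ge> 1"
  proof -
    have "1 \<le> 1 / \<alpha>" using alpha by simp
    also have "1 / \<alpha> \<le> real d / \<alpha>" using d1 alpha by (intro divide_right_mono) auto
    finally show ?thesis using q by linarith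
  qed
  have qa: "real (d - 1) + 1 \<le> \<alpha> * q" using d1 dq by (simp add: of_nat_diff)
  define A where "A = real d * volV / \<mu> ^ d"
  have Apos: "A > 0" using d1 volpos cone(1) by (simp add: A_def)
  have kap: "kappa d volV \<mu> M \<alpha> q t = A * integral {0..\<mu>} (fK M \<alpha> q (d - 1) t)" for t
  proof -
    have "fK M \<alpha> q (d - 1) t = (\<lambda>r. (t + M * r powr \<alpha>) powr (-q) * r ^ (d - 1))"
      by (rule ext) (simp add: fK_def)
    then show ?thesis by (simp add: kappa_def A_def)
  qed
  have ex1: "\<exists>!t. t > 0 \<and> kappa d volV \<mu> M \<alpha> q t = C"
    using K_unique[OF MC(1) alpha(1) q1 cone(1) qa Apos MC(2)] by (simp add: kap)
  have dprop: "\<delta> > 0 \<and> kappa d volV \<mu> M \<alpha> q \<delta> = C"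
    unfolding \<delta>_def by (rule theI'[OF ex1])
  then have d0: "\<delta> > 0" and kd: "A * integral {0..\<mu>} (fK M \<alpha> q (d - 1) \<delta>) = C"
    by (auto simp: kap)
  define h where "h = (\<lambda>r. (\<delta> + M * r powr \<alpha>) powr (-q))"
  have hnn: "h a \<ge> 0" for a by (simp add: h_def)
  have hnn': "\<And>a. 0 \<le> a \<Longrightarrow> a \<le> \<mu> \<Longrightarrow> h a \<ge> 0" using hnn by auto
  have anti: "\<And>a b. 0 \<le> a \<Longrightarrow> a \<le> b \<Longrightarrow> b \<le> \<mu> \<Longrightarrow> h b \<le> h a"
  proof -
    fix a b :: real assume ab: "0 \<le> a" "a \<le> b" "b \<le> \<mu>"
    have "a powr \<alpha> \<le> b powr \<alpha>" using ab alpha by (intro powr_mono2) auto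
    then have "\<delta> + M * a powr \<alpha> \<le> \<delta> + M * b powr \<alpha>" using MC by (simp add: mult_left_mono)
    moreover have "\<delta> + M * a powr \<alpha> > 0" using d0 MC by (simp add: add_pos_nonneg)
    ultimately show "h b \<le> h a" unfolding h_def using q1 by (intro powr_mono2') auto
  qed
  have hcont: "continuous_on {0..\<mu>} h"
  proof -
    have "continuous_on {0..\<mu>} (fK M \<alpha> q 0 \<delta>)" using fK_cont_r[of M \<alpha> \<delta> \<mu> q 0] MC alpha d0 by simp
    moreover have "fK M \<alpha> q 0 \<delta> = h" by (simp add: fK_def h_def fun_eq_iff)
    ultimately show ?thesis by simp
  qed
  have fKh: "fK M \<alpha> q (d - 1) \<delta> = (\<lambda>t. h t * t ^ (d - 1))" by (simp add: fK_def h_def fun_eq_iff)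
  have main: "J x > \<delta>" if x\<Omega>: "x \<in> \<Omega>" for x
  proof (rule ccontr)
    assume "\<not> J x > \<delta>"
    then have Jx: "J x \<le> \<delta>" by simp
    obtain Q where Q: "rotation_matrix Q" "(\<lambda>v. x + Q *v v) ` cone_V i0 \<mu> \<nu> \<subseteq> \<Omega>"
      using cone(3) x\<Omega> unfolding interior_cone_property_def by blast
    have oQ: "orthogonal_matrix Q" and dQ: "det Q = 1" using Q(1) by (auto simp: rotation_matrix_def)
    define e where "e = Q *v axis i0 1"
    define W where "W = {y. norm (y - x) < \<mu> \<and> (y - x) \<bullet> e > \<nu> * norm (y - x)}"
    have W\<Omega>: "W \<subseteq> \<Omega>" using Q(2) cone_img[OF oQ, of x i0 \<mu> \<nu>] by (simp add: W_def e_def)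
    have ne: "norm e = 1" using orth_norm[OF oQ, of "axis i0 1"] by (simp add: e_def)
    have ee: "e \<bullet> e = 1" using ne by (simp add: power2_norm_eq_inner[symmetric])
    define s where "s = (if \<nu> > 0 then \<nu> * \<mu> / (2 * (1 + \<nu>)) else \<mu> / 2)"
    have s01: "0 < s \<and> s < \<mu>"
    proof (cases "\<nu> > 0")
      case True
      then have dd: "2 * (1 + \<nu>) > 0" by simp
      have "\<mu> * (2 + \<nu>) > 0" using True cone(1) by simp
      moreover have "\<mu> * (2 * (1 + \<nu>)) - \<nu> * \<mu> = \<mu> * (2 + \<nu>)" by (simp add: algebra_simps)
      ultimately have "\<nu> * \<mu> < \<mu> * (2 * (1 + \<nu>))" by linarith
      then have "\<nu> * \<mu> / (2 * (1 + \<nu>)) < \<mu>" using dd by (simp add: pos_divide_less_eq)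
      moreover have "\<nu> * \<mu> / (2 * (1 + \<nu>)) > 0" using True cone(1) dd by simp
      ultimately show ?thesis using True by (simp add: s_def)
    next
      case False
      then show ?thesis using cone(1) by (simp add: s_def)
    qed
    define y0 where "y0 = x + s *\<^sub>R e"
    have "norm (y0 - x) = s" using s01 ne by (simp add: y0_def)
    moreover have "(y0 - x) \<bullet> e = s" using ee by (simp add: y0_def)
    moreover have "\<nu> * s < s" using s01 cone(2) by simp
    ultimately have "y0 \<in> W" using s01 by (simp add: W_def)
    then have y0\<Omega>: "y0 \<in> \<Omega>" using W\<Omega> by auto
    obtain Q' where Q': "rotation_matrix Q'" "(\<lambda>v. y0 + Q' *v v) ` cone_V i0 \<mu> \<nu> \<subseteq> \<Omega>"
      using cone(3) y0\<Omega> unfolding interior_cone_property_def by blast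
    have oQ': "orthogonal_matrix Q'" and dQ': "det Q' = 1" using Q'(1) by (auto simp: rotation_matrix_def)
    define v where "v = Q' *v axis i0 1"
    have nv: "norm v = 1" using orth_norm[OF oQ', of "axis i0 1"] by (simp add: v_def)
    have one: "v = e" if "CARD('n) = 1"
      using card1_rot[OF that dQ, of i0] card1_rot[OF that dQ', of i0] by (simp add: v_def e_def)
    obtain w where w: "norm w < \<mu>" "\<nu> * norm w < w \<bullet> v"
      "\<not> (norm (s *\<^sub>R e + w) \<le> \<mu> \<and> \<nu> * norm (s *\<^sub>R e + w) \<le> (s *\<^sub>R e + w) \<bullet> e)"
      using geo_vec[OF ne nv cone(1) cone(2) s_def one refl] by blast
    define z where "z = y0 + w"
    have z\<Omega>: "z \<in> \<Omega>" using Q'(2) cone_img[OF oQ', of y0 i0 \<mu> \<nu>] w(1,2) by (auto simp: z_def v_def)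
    define K where "K = {y. norm (y - x) \<le> \<mu> \<and> \<nu> * norm (y - x) \<le> (y - x) \<bullet> e}"
    have zx: "z - x = s *\<^sub>R e + w" by (simp add: z_def y0_def)
    have zK: "z \<notin> K" using w(3) zx by (simp add: K_def)
    have WK: "W \<subseteq> K" by (auto simp: W_def K_def)
    have clK: "closed K" unfolding K_def
      by (intro closed_Collect_conj closed_Collect_le continuous_intros)
    have "open (\<Omega> - K)" using dom(1) clK by (rule open_Diff)
    moreover have "z \<in> \<Omega> - K" using z\<Omega> zK by simp
    ultimately obtain \<epsilon> where \<epsilon>: "\<epsilon> > 0" "ball z \<epsilon> \<subseteq> \<Omega> - K" by (meson openE)
    define B where "B = ball z (min \<epsilon> (\<mu> / 2))"
    have Bpos: "min \<epsilon> (\<mu> / 2) > 0" using \<epsilon> cone(1) by simp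
    have B\<Omega>: "B \<subseteq> \<Omega>" and BK: "B \<inter> K = {}" using \<epsilon> by (auto simp: B_def)
    have BW: "B \<inter> W = {}" using BK WK by auto
    define cB where "cB = (max \<delta> (J z + M * \<mu> powr \<alpha>)) powr (-q)"
    have cB0: "cB > 0" using d0 by (simp add: cB_def)
    have gB: "cB \<le> (max \<delta> (J y)) powr (-q)" if yB: "y \<in> B" for y
    proof -
      have dz: "dist y z < \<mu>" using yB Bpos by (auto simp: B_def dist_commute)
      have "y \<in> \<Omega>" using yB B\<Omega> by auto
      then have "\<bar>J y - J z\<bar> \<le> M * dist y z powr \<alpha>" using seminorm z\<Omega> dz by blast
      moreover have "dist y z powr \<alpha> \<le> \<mu> powr \<alpha>" using dz alpha by (intro powr_mono2) auto
      moreover have "M * dist y z powr \<alpha> \<le> M * \<mu> powr \<alpha>"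
        using MC \<open>dist y z powr \<alpha> \<le> \<mu> powr \<alpha>\<close> by (intro mult_left_mono) auto
      ultimately have "J y \<le> J z + M * \<mu> powr \<alpha>" using abs_le_D1 by fastforce
      then have "max \<delta> (J y) \<le> max \<delta> (J z + M * \<mu> powr \<alpha>)" by simp
      then show ?thesis unfolding cB_def using d0 q1 by (intro powr_mono2') auto
    qed
    have gW: "h (norm (y - x)) \<le> (max \<delta> (J y)) powr (-q)" if yW: "y \<in> W" for y
    proof -
      have dy: "dist y x < \<mu>" using yW by (simp add: W_def dist_norm)
      have "y \<in> \<Omega>" using yW W\<Omega> by auto
      then have "\<bar>J y - J x\<bar> \<le> M * dist y x powr \<alpha>" using seminorm x\<Omega> dy by blast
      then have "J y \<le> \<delta> + M * norm (y - x) powr \<alpha>" using Jx by (simp add: dist_norm)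
      moreover have "\<delta> \<le> \<delta> + M * norm (y - x) powr \<alpha>" using MC by simp
      ultimately have "max \<delta> (J y) \<le> \<delta> + M * norm (y - x) powr \<alpha>" by simp
      then show ?thesis unfolding h_def using d0 q1 by (intro powr_mono2') auto
    qed
    define c1 where "c1 = volV * real d * h 0"
    have c10: "c1 \<ge> 0" using volpos hnn by (simp add: c1_def)
    define P where "P = cB * measure lebesgue B"
    have P0: "P > 0" using cB0 ball_meas_pos[OF Bpos, of z] by (simp add: P_def B_def)
    obtain N :: nat where N: "c1 / P < real N" using reals_Archimedean2 by blast
    have "c1 / P \<ge> 0" using c10 P0 by simp
    then have "real N > 0" using N by linarith
    then have N0: "N > 0" by simp
    have "c1 < P * real N" using N P0 by (simp add: pos_divide_less_eq mult.commute[of P])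
    then have c1N: "c1 / real N < P" using N0 by (simp add: pos_divide_less_eq)
    define Lo where "Lo = (\<Sum>k<N. h (\<mu> * real (Suc k) / real N) *
           ((\<mu> * real (Suc k) / real N) ^ d - (\<mu> * real k / real N) ^ d))"
    define Up where "Up = (\<Sum>k<N. h (\<mu> * real k / real N) *
           ((\<mu> * real (Suc k) / real N) ^ d - (\<mu> * real k / real N) ^ d))"
    define Gp where "Gp = (\<Sum>k<N. (h (\<mu> * real k / real N) - h (\<mu> * real (Suc k) / real N)) *
           ((\<mu> * real (Suc k) / real N) ^ d - (\<mu> * real k / real N) ^ d))"
    define L where "L = volV / \<mu> ^ d * Lo"
    have ex: "\<exists>\<phi>. \<phi> \<in> borel_measurable lebesgue \<and>
       (\<forall>y. \<phi> y \<le> ennreal (h (norm (y - x))) * indicator W y) \<and>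
       integral\<^sup>N lebesgue \<phi> = ennreal L"
      unfolding W_def e_def L_def Lo_def volV_def d_def
      by (rule shell_lower[OF oQ cone(1) N0 hnn' anti])
    from ex obtain \<phi> where \<phi>all: "\<phi> \<in> borel_measurable lebesgue \<and>
       (\<forall>y. \<phi> y \<le> ennreal (h (norm (y - x))) * indicator W y) \<and>
       integral\<^sup>N lebesgue \<phi> = ennreal L" ..
    have \<phi>1: "\<phi> \<in> borel_measurable lebesgue" using \<phi>all by blast
    have \<phi>2: "\<phi> y \<le> ennreal (h (norm (y - x))) * indicator W y" for y using \<phi>all by blast
    have \<phi>3: "integral\<^sup>N lebesgue \<phi> = ennreal L" using \<phi>all by blast
    have UpLG: "Up = Lo + Gp" unfolding Up_def Lo_def Gp_def
      by (simp add: sum.distrib[symmetric] algebra_simps)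
    have ru: "real d * integral {0..\<mu>} (\<lambda>t. h t * t ^ (d - 1)) \<le> Up"
      unfolding Up_def by (rule riemann_upper[OF cone(1) N0 d1 hcont anti])
    have rg: "Gp \<le> real d * \<mu> ^ d / real N * h 0"
      unfolding Gp_def by (rule riemann_gap[OF cone(1) N0 d1 anti hnn'])
    have vm: "volV / \<mu> ^ d \<ge> 0" using volpos cone(1) by simp
    have "C = volV / \<mu> ^ d * (real d * integral {0..\<mu>} (\<lambda>t. h t * t ^ (d - 1)))"
    proof -
      have "C = A * integral {0..\<mu>} (\<lambda>t. h t * t ^ (d - 1))" using kd fKh by simp
      also have "\<dots> = volV / \<mu> ^ d * (real d * integral {0..\<mu>} (\<lambda>t. h t * t ^ (d - 1)))"
        by (simp add: A_def)
      finally show ?thesis .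
    qed
    also have "\<dots> \<le> volV / \<mu> ^ d * Up" using ru vm by (rule mult_left_mono)
    also have "\<dots> = L + volV / \<mu> ^ d * Gp" by (simp add: UpLG L_def distrib_left)
    also have "volV / \<mu> ^ d * Gp \<le> volV / \<mu> ^ d * (real d * \<mu> ^ d / real N * h 0)"
      using rg vm by (rule mult_left_mono)
    also have "volV / \<mu> ^ d * (real d * \<mu> ^ d / real N * h 0) = c1 / real N"
      using cone(1) by (simp add: c1_def field_simps)
    finally have CL: "C \<le> L + c1 / real N" by simp
    have pw: "\<phi> y + ennreal cB * indicator B y \<le> ennreal ((max \<delta> (J y)) powr (-q)) * indicator \<Omega> y" for y
    proof (cases "y \<in> B")
      case True
      then have "y \<notin> W" using BW by auto
      then have "\<phi> y = 0" using \<phi>2[of y] by simp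
      then show ?thesis using True B\<Omega> gB[OF True] by (auto intro: ennreal_leI)
    next
      case False
      show ?thesis
      proof (cases "y \<in> W")
        case True
        then have "\<phi> y \<le> ennreal (h (norm (y - x)))" using \<phi>2[of y] by simp
        also have "\<dots> \<le> ennreal ((max \<delta> (J y)) powr (-q))" using gW[OF True] by (rule ennreal_leI)
        finally show ?thesis using False True W\<Omega> by auto
      next
        case F2: False
        then have "\<phi> y = 0" using \<phi>2[of y] by simp
        then show ?thesis using False by simp
      qed
    qed
    have Bmeas: "B \<in> sets lebesgue" by (simp add: B_def)
    have "integral\<^sup>N lebesgue (\<lambda>y. \<phi> y + ennreal cB * indicator B y)
        = integral\<^sup>N lebesgue \<phi> + integral\<^sup>N lebesgue (\<lambda>y. ennreal cB * indicator B y)"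
      by (rule nn_integral_add) (use \<phi>1 Bmeas in auto)
    also have "integral\<^sup>N lebesgue (\<lambda>y. ennreal cB * indicator B y) = ennreal cB * emeasure lebesgue B"
      by (rule nn_integral_cmult_indicator[OF Bmeas])
    also have "emeasure lebesgue B = ennreal (measure lebesgue B)"
      by (rule emeasure_eq_measure2) (simp add: B_def)
    finally have eqI: "integral\<^sup>N lebesgue (\<lambda>y. \<phi> y + ennreal cB * indicator B y)
        = ennreal L + ennreal P" using cB0 by (simp add: \<phi>3 P_def ennreal_mult'')
    have "ennreal L + ennreal P \<le> (\<integral>\<^sup>+ y\<in>\<Omega>. ennreal ((max \<delta> (J y)) powr (-q)) \<partial>lebesgue)"
      unfolding eqI[symmetric] by (rule nn_integral_mono) (use pw in auto)
    also have "\<dots> \<le> ennreal C" by (rule int_bound)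
    finally have le: "ennreal L + ennreal P \<le> ennreal C" .
    have "ennreal L = ennreal (max L 0)" by (simp add: max_def ennreal_neg)
    then have "ennreal (max L 0 + P) \<le> ennreal C" using le P0 by (simp add: ennreal_plus)
    then have "max L 0 + P \<le> C" using MC by (simp add: ennreal_le_iff)
    then show False using CL c1N by linarith
  qed
  show ?thesis using d0 main by blast
qed


end
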